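(* Let $D$ be an oriented diagram with double lines representing a knot in $S_g\times S^1$, and let $c$ be a classical crossing of $D$. Then the crossing sliding move at $c$ (inserting, on each of the two strands through $c$, a double line of sign $\varepsilon$ immediately before $c$ and a double line of sign $-\varepsilon$ immediately after $c$, with the same $\varepsilon\in\{\pm1\}$ for both strands, without changing the crossing; or the inverse operation) can be realized as a finite composition of the moves (R), (V), (4), (5) defining equivalence of diagrams with double lines; in fact it is a composition of two crossing change moves.
   Context: $S_g$ is a closed oriented surface of genus $g$; a knot in $S_g\times S^1$ is a smooth embedding of $S^1$, and knots are considered up to equivalence, i.e. isotopy together with stabilization/destabilization of $S_g\times S^1$ (destabilization: cut along a torus homotopic to $C\times S^1$, $C$ a non-contractible circle on the surface, the torus being disjoint from the knot, and glue two copies of $D^2\times S^1$ to the new boundary tori). Fix $x_0\in S^1$. A knot is represented by a diagram with double lines: a virtual knot diagram in the plane (classical and virtual crossings) decorated by finitely many double lines, i.e. marks on the curve away from crossings recording the points where the knot meets $S_g\times\{x_0\}$. For an oriented diagram every double line has a sign $\pm1$ according to the direction in which the knot passes through $S_g\times\{x_0\}$. Two diagrams represent equivalent knots iff they are related by finitely many of the moves: (R) generalized Reidemeister moves of virtual knot theory; (V) sliding a double line along the curve through a virtual crossing; (4) sliding a double line along its strand through a classical crossing while switching the over/under information of that crossing; (5) creating or deleting two adjacent double lines of opposite signs on an arc. A crossing change move at a classical crossing $c$ is the composite of (5) and (4): it switches the over/under information at $c$ and leaves, on one strand through $c$, two double lines of opposite signs immediately before and after $c$. *)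

theory Defs
  imports Main
begin

text \<open>Diagrams with double lines are encoded by their (signed) Gauss words.
  A letter is either a passage through a classical crossing (label, over/under flag)
  or a double line with its sign.  Virtual crossings are not recorded, so move (V)
  is built into the encoding; the word is read cyclically along the orientation,
  so words are considered up to rotation.\<close>

datatype letter = Cross nat bool | DL int

record diagram =
  word :: "letter list"
  csign :: "nat \<Rightarrow> int"

definition rot_eq :: "'a list \<Rightarrow> 'a list \<Rightarrow> bool" where
  "rot_eq u v \<longleftrightarrow> (\<exists>n. v = rotate n u)"

definition wf_diagram :: "diagram \<Rightarrow> bool" where
  "wf_diagram D \<longleftrightarrow>
     (\<forall>c b. Cross c b \<in> set (word D) \<longrightarrow>
        count_list (word D) (Cross c True) = 1 \<and> count_list (word D) (Cross c False) = 1
        \<and> csign D c \<in> {1, -1})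
   \<and> (\<forall>e. DL e \<in> set (word D) \<longrightarrow> e \<in> {1, -1})"

definition is_classical_crossing :: "diagram \<Rightarrow> nat \<Rightarrow> bool" where
  "is_classical_crossing D c \<longleftrightarrow> Cross c True \<in> set (word D) \<and> Cross c False \<in> set (word D)"

fun sw :: "nat \<Rightarrow> letter \<Rightarrow> letter" where
  "sw c (Cross d b) = (if d = c then Cross d (\<not> b) else Cross d b)"
| "sw c (DL e) = DL e"

definition switch_diag :: "nat \<Rightarrow> diagram \<Rightarrow> letter list \<Rightarrow> diagram" where
  "switch_diag c D w = \<lparr>word = map (sw c) w, csign = (csign D)(c := - csign D c)\<rparr>"

definition move5 :: "diagram \<Rightarrow> diagram \<Rightarrow> bool" where
  "move5 D D' \<longleftrightarrow> csign D' = csign D \<and>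
     (\<exists>a d e. e \<in> {1, -1} \<and>
       ((rot_eq (word D) (a @ d) \<and> rot_eq (word D') (a @ [DL e, DL (-e)] @ d)) \<or>
        (rot_eq (word D) (a @ [DL e, DL (-e)] @ d) \<and> rot_eq (word D') (a @ d))))"

definition move4 :: "diagram \<Rightarrow> diagram \<Rightarrow> bool" where
  "move4 D D' \<longleftrightarrow>
     (\<exists>a d e c b. csign D' = (csign D)(c := - csign D c) \<and>
       ((rot_eq (word D) (a @ [DL e, Cross c b] @ d) \<and>
         rot_eq (word D') (map (sw c) (a @ [Cross c b, DL e] @ d))) \<or>
        (rot_eq (word D) (a @ [Cross c b, DL e] @ d) \<and>
         rot_eq (word D') (map (sw c) (a @ [DL e, Cross c b] @ d)))))"

definition crossing_change :: "nat \<Rightarrow> diagram \<Rightarrow> diagram \<Rightarrow> bool" where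
  "crossing_change c D D' \<longleftrightarrow>
     (\<exists>a d e b. e \<in> {1, -1} \<and> rot_eq (word D) (a @ [Cross c b] @ d) \<and>
        rot_eq (word D') (map (sw c) (a @ [DL e, Cross c b, DL (-e)] @ d)) \<and>
        csign D' = (csign D)(c := - csign D c))"

text \<open>Crossing sliding move at c (forward direction; the inverse operation is the
  converse relation).\<close>
definition crossing_slide :: "nat \<Rightarrow> diagram \<Rightarrow> diagram \<Rightarrow> bool" where
  "crossing_slide c D D' \<longleftrightarrow> csign D' = csign D \<and>
     (\<exists>a m d e b1 b2. e \<in> {1, -1} \<and>
        rot_eq (word D) (a @ [Cross c b1] @ m @ [Cross c b2] @ d) \<and>
        rot_eq (word D') (a @ [DL e, Cross c b1, DL (-e)] @ m @ [DL e, Cross c b2, DL (-e)] @ d))"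

end

theory Submission
  imports Defs
begin

lemma sw_sw[simp]: "sw c (sw c x) = x"
  by (cases x) auto

lemma map_sw_sw[simp]: "map (sw c) (map (sw c) xs) = xs"
  by (induct xs) auto

lemma sw_comp[simp]: "sw c \<circ> sw c = id"
  by (rule ext) simp

lemma rot_eq_refl: "rot_eq u u"
  unfolding rot_eq_def by (rule exI[of _ 0]) simp

theorem mainTheorem1:
  assumes "wf_diagram D" and "is_classical_crossing D c" and "crossing_slide c D D'"
  shows "\<exists>D1. crossing_change c D D1 \<and> crossing_change c D1 D'
           \<and> (move5 OO move4) D D1 \<and> (move5 OO move4) D1 D'"
proof -
  from assms(3) obtain a m d e b1 b2 where cs: "csign D' = csign D" and e: "e \<in> {1, -1}"
    and r1: "rot_eq (word D) (a @ [Cross c b1] @ m @ [Cross c b2] @ d)"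
    and r2: "rot_eq (word D') (a @ [DL e, Cross c b1, DL (-e)] @ m @ [DL e, Cross c b2, DL (-e)] @ d)"
    unfolding crossing_slide_def by blast
  define D1 where "D1 = \<lparr>word = map (sw c) (a @ [DL e, Cross c b1, DL (-e)] @ m @ [Cross c b2] @ d),
      csign = (csign D)(c := - csign D c)\<rparr>"
  have c1: "crossing_change c D D1"
    unfolding crossing_change_def D1_def
    using e r1 rot_eq_refl by fastforce
  have c2: "crossing_change c D1 D'"
    unfolding crossing_change_def
    apply (rule exI[of _ "map (sw c) (a @ [DL e, Cross c b1, DL (-e)] @ m)"])
    apply (rule exI[of _ "map (sw c) d"])
    apply (rule exI[of _ e])
    apply (rule exI[of _ "\<not> b2"])
    using e r2 cs rot_eq_refl by (auto simp: D1_def)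
  define X where "X = \<lparr>word = a @ [DL e, DL (-e)] @ (Cross c b1 # m @ [Cross c b2] @ d),
      csign = csign D\<rparr>"
  have m51: "move5 D X"
    unfolding move5_def X_def using e r1 rot_eq_refl by fastforce
  have m41: "move4 X D1"
    unfolding move4_def
    apply (rule exI[of _ "a @ [DL e]"])
    apply (rule exI[of _ "m @ [Cross c b2] @ d"])
    apply (rule exI[of _ "-e"])
    apply (rule exI[of _ c])
    apply (rule exI[of _ b1])
    using rot_eq_refl by (auto simp: X_def D1_def)
  define Y where "Y = \<lparr>word = map (sw c) (a @ [DL e, Cross c b1, DL (-e)] @ m) @ [DL e, DL (-e)]
      @ map (sw c) (Cross c b2 # d), csign = (csign D)(c := - csign D c)\<rparr>"
  have m52: "move5 D1 Y"
    unfolding move5_def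
    apply (rule conjI)
     apply (simp add: Y_def D1_def)
    apply (rule exI[of _ "map (sw c) (a @ [DL e, Cross c b1, DL (-e)] @ m)"])
    apply (rule exI[of _ "map (sw c) (Cross c b2 # d)"])
    apply (rule exI[of _ e])
    using e rot_eq_refl by (auto simp: Y_def D1_def)
  have m42: "move4 Y D'"
    unfolding move4_def
    apply (rule exI[of _ "map (sw c) (a @ [DL e, Cross c b1, DL (-e)] @ m @ [DL e])"])
    apply (rule exI[of _ "map (sw c) d"])
    apply (rule exI[of _ "-e"])
    apply (rule exI[of _ c])
    apply (rule exI[of _ "\<not> b2"])
    using r2 cs rot_eq_refl by (auto simp: Y_def)
  show ?thesis using c1 c2 m51 m41 m52 m42 by blast
qed

end
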